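(* Let $n\ge2$ be an integer, $j$ a positive integer, $\alpha=1-\frac1n$, $\gamma_n=\frac12+\frac1n$, $\beta\le 0$ real with $Q\equiv\alpha-\beta-1\ge1$. For $z>0$ set $y=-jz^n$, $F(t)=yt+Q\log\frac{t}{t+1}$, $G(u)=-u^2+2(-y)^{1/2}u+(2Q+\gamma_n)\log u$, $t_0(z)=\frac{-1+\sqrt{1+4Q/(-y)}}{2}$, $u_0(z)=\frac{(-y)^{1/2}}{2}(1+\sqrt{1+\frac{4Q+2\gamma_n}{-y}})$, and $$\widehat F(z)=-\frac{jz^n}{2}+F(t_0(z)),\qquad \widehat G(z)=-\frac{jz^n}{2}+G(u_0(z)),$$ where $F$ and $G$ are evaluated with $y=-jz^n$. Then for every $\eta\ge0$, on the region $z\ge\eta^{2/n}$ the function $\widehat F(z)+\eta z^{n/2}$ is decreasing and the function $\widehat G(z)-\eta z^{n/2}$ is increasing. *)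

theory Defs
  imports Complex_Main
begin

definition alpha_n :: "nat \<Rightarrow> real" where
  "alpha_n n = 1 - 1 / real n"

definition gamma_n :: "nat \<Rightarrow> real" where
  "gamma_n n = 1/2 + 1 / real n"

definition QQ :: "nat \<Rightarrow> real \<Rightarrow> real" where
  "QQ n \<beta> = alpha_n n - \<beta> - 1"

definition yy :: "nat \<Rightarrow> nat \<Rightarrow> real \<Rightarrow> real" where
  "yy n j z = - real j * z ^ n"

definition FF :: "nat \<Rightarrow> nat \<Rightarrow> real \<Rightarrow> real \<Rightarrow> real \<Rightarrow> real" where
  "FF n j \<beta> z t = yy n j z * t + QQ n \<beta> * ln (t / (t + 1))"

definition GG :: "nat \<Rightarrow> nat \<Rightarrow> real \<Rightarrow> real \<Rightarrow> real \<Rightarrow> real" where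
  "GG n j \<beta> z u = - (u ^ 2) + 2 * sqrt (- yy n j z) * u + (2 * QQ n \<beta> + gamma_n n) * ln u"

definition t0 :: "nat \<Rightarrow> nat \<Rightarrow> real \<Rightarrow> real \<Rightarrow> real" where
  "t0 n j \<beta> z = (-1 + sqrt (1 + 4 * QQ n \<beta> / (- yy n j z))) / 2"

definition u0 :: "nat \<Rightarrow> nat \<Rightarrow> real \<Rightarrow> real \<Rightarrow> real" where
  "u0 n j \<beta> z = sqrt (- yy n j z) / 2 *
     (1 + sqrt (1 + (4 * QQ n \<beta> + 2 * gamma_n n) / (- yy n j z)))"

definition Fhat :: "nat \<Rightarrow> nat \<Rightarrow> real \<Rightarrow> real \<Rightarrow> real" where
  "Fhat n j \<beta> z = - real j * z ^ n / 2 + FF n j \<beta> z (t0 n j \<beta> z)"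

definition Ghat :: "nat \<Rightarrow> nat \<Rightarrow> real \<Rightarrow> real \<Rightarrow> real" where
  "Ghat n j \<beta> z = - real j * z ^ n / 2 + GG n j \<beta> z (u0 n j \<beta> z)"

end

theory Submission imports Defs begin
lemma Fderiv:
  fixes J Q w :: real
  assumes J: "J>0" and Q: "Q>0" and w: "w>0"
  defines "T \<equiv> \<lambda>w. (-1 + sqrt(1 + 4*Q/(J*w^2)))/2"
  shows "DERIV (\<lambda>w. -J*w^2/2 - J*w^2 * T w + Q*(ln (T w) - ln (T w + 1))) w :> (-J*w - 2*J*w*T w)"
proof -
  have pos: "0 < 1 + 4*Q/(J*w^2)" using J Q w by (simp add: add_pos_pos)
  have g: "DERIV (\<lambda>w. 1 + 4*Q/(J*w^2)) w :> - (8*Q/(J*w^3))"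
    using w J by (auto intro!: derivative_eq_intros simp: field_simps power2_eq_square power3_eq_cube)
  have sq: "DERIV (\<lambda>w. sqrt (1 + 4*Q/(J*w^2))) w :> inverse (sqrt (1 + 4*Q/(J*w^2))) / 2 * - (8*Q/(J*w^3))"
    by (rule DERIV_chain2[OF DERIV_real_sqrt[OF pos] g])
  have "DERIV T w :> (0 + inverse (sqrt (1 + 4*Q/(J*w^2))) / 2 * - (8*Q/(J*w^3))) / 2" unfolding T_def
    by (rule DERIV_cdivide[OF DERIV_add[OF DERIV_const sq]])
  then have "\<exists>D. DERIV T w :> D" by blast
  then obtain D where D: "DERIV T w :> D" by blast
  define r where "r = sqrt(1 + 4*Q/(J*w^2))"
  have r2: "r^2 = 1 + 4*Q/(J*w^2)" using pos r_def by simp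
  have r1: "r > 1" unfolding r_def using J Q w by (simp add: real_less_rsqrt)
  have Tr: "T w = (r - 1)/2" unfolding T_def r_def by simp
  have Tpos: "T w > 0" using Tr r1 by simp
  have "T w * (T w + 1) = (r^2 - 1)/4" unfolding Tr by (simp add: field_simps power2_eq_square)
  then have key: "T w * (T w + 1) = Q/(J*w^2)" using r2 by simp
  have "DERIV (\<lambda>w. -J*w^2/2 - J*w^2 * T w + Q*(ln (T w) - ln (T w + 1))) w :>
     (-J*w - (2*J*w*T w + J*w^2*D) + Q*(D/T w - D/(T w+1)))"
    by (rule derivative_eq_intros D refl | use Tpos in simp)+
  moreover have "Q*(D/T w - D/(T w+1)) = J*w^2*D"
  proof -
    have "Q*(D/T w - D/(T w+1)) = Q*D/(T w * (T w + 1))" using Tpos by (simp add: field_simps)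
    also have "\<dots> = J*w^2*D" using key J w Q by simp
    finally show ?thesis .
  qed
  ultimately show ?thesis by simp
qed

lemma Gderiv:
  fixes J c w :: real
  assumes J: "J>0" and c: "c>0" and w: "w>0"
  defines "U \<equiv> \<lambda>w. (sqrt J * w + sqrt(J*w^2 + 2*c))/2"
  shows "DERIV (\<lambda>w. -J*w^2/2 - (U w)^2 + 2*(sqrt J * w)*U w + c*ln(U w)) w :> (-J*w + 2*sqrt J*U w)"
proof -
  have pos: "0 < J*w^2 + 2*c" using J c w by (simp add: add_pos_pos)
  have g: "DERIV (\<lambda>w. J*w^2 + 2*c) w :> 2*J*w"
    by (auto intro!: derivative_eq_intros)
  have sq: "DERIV (\<lambda>w. sqrt (J*w^2 + 2*c)) w :> inverse (sqrt (J*w^2 + 2*c)) / 2 * (2*J*w)"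
    by (rule DERIV_chain2[OF DERIV_real_sqrt[OF pos] g])
  have "DERIV U w :> (sqrt J * 1 + inverse (sqrt (J*w^2 + 2*c)) / 2 * (2*J*w)) / 2" unfolding U_def
    by (rule DERIV_cdivide[OF DERIV_add[OF DERIV_cmult[OF DERIV_ident] sq]])
  then obtain D where D: "DERIV U w :> D" by blast
  define a where "a = sqrt J * w"
  define b where "b = sqrt(J*w^2 + 2*c)"
  have b2: "b^2 = a^2 + 2*c" unfolding a_def b_def using pos J by (simp add: power_mult_distrib)
  have apos: "a > 0" unfolding a_def using J w by simp
  have bpos: "b > 0" unfolding b_def using pos by simp
  have Ua: "U w = (a+b)/2" unfolding U_def a_def b_def by simp
  have Upos: "U w > 0" using Ua apos bpos by simp
  have "(U w)^2 - a * U w = (b^2 - a^2)/4" unfolding Ua by (simp add: field_simps power2_eq_square)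
  then have key: "c = 2*(U w)^2 - 2*a*U w" using b2 by simp
  have d: "DERIV (\<lambda>w. -J*w^2/2 - (U w)^2 + 2*(sqrt J * w)*U w + c*ln(U w)) w :>
     (-J*w - 2*U w*D + 2*(sqrt J * U w + sqrt J * w * D) + c*(D/U w))"
    (is "DERIV _ _ :> ?E")
    by (rule derivative_eq_intros D refl | use Upos in simp)+
  have "c*(D/U w) = D*(2*U w - 2*a)"
    using Upos unfolding key by (simp add: field_simps power2_eq_square)
  hence f: "?E = -J*w + 2*sqrt J*U w" unfolding a_def by (simp add: algebra_simps)
  show ?thesis using d unfolding f .
qed


theorem lemma4p7:
  fixes n j :: nat and \<beta> \<eta> :: real
  assumes "n \<ge> 2" and "j \<ge> 1"
    and "\<beta> \<le> 0" and "QQ n \<beta> \<ge> 1"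
    and "\<eta> \<ge> 0"
  shows "antimono_on {z. z > 0 \<and> z \<ge> \<eta> powr (2 / real n)}
           (\<lambda>z. Fhat n j \<beta> z + \<eta> * z powr (real n / 2))
       \<and> mono_on {z. z > 0 \<and> z \<ge> \<eta> powr (2 / real n)}
           (\<lambda>z. Ghat n j \<beta> z - \<eta> * z powr (real n / 2))"
proof -
  define Q where "Q = QQ n \<beta>"
  define J where "J = real j"
  define c where "c = 2*Q + gamma_n n"
  have Q1: "Q \<ge> 1" using assms Q_def by simp
  have J1: "J \<ge> 1" using assms J_def by simp
  have gpos: "gamma_n n > 0" unfolding gamma_n_def by (simp add: add_pos_nonneg)
  have cpos: "c > 0" using Q1 gpos c_def by simp
  have npos: "real n > 0" using assms by simp
  define T where "T \<equiv> \<lambda>w. (-1 + sqrt(1 + 4*Q/(J*w^2)))/2"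
  define fF where "fF = (\<lambda>w. -J*w^2/2 - J*w^2 * T w + Q*(ln (T w) - ln (T w + 1)))"
  define U where "U \<equiv> \<lambda>w. (sqrt J * w + sqrt(J*w^2 + 2*c))/2"
  define gG where "gG = (\<lambda>w. -J*w^2/2 - (U w)^2 + 2*(sqrt J * w)*U w + c*ln(U w))"
  define S where "S = {z. z > 0 \<and> z \<ge> \<eta> powr (2 / real n)}"
  have wz: "z^n = (z powr (real n/2))^2" if "z > 0" for z :: real
  proof -
    have "(z powr (real n/2))^2 = z powr (real n/2) * z powr (real n/2)"
      by (simp add: power2_eq_square)
    also have "\<dots> = z powr (real n/2 + real n/2)" by (simp add: powr_add[symmetric])
    also have "\<dots> = z powr (real n)" by simp
    also have "\<dots> = z ^ n" using that by (simp add: powr_realpow)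
    finally show ?thesis by simp
  qed
  have Tpos: "T x > 0" if "x > 0" for x
  proof -
    have "1 < 1 + 4*Q/(J*x^2)" using that Q1 J1 by simp
    then have "1 < sqrt (1 + 4*Q/(J*x^2))" by (simp add: real_less_rsqrt)
    then show ?thesis unfolding T_def by simp
  qed
  have Ulow: "U x \<ge> sqrt J * x" if "x > 0" for x
  proof -
    have "sqrt J * x = sqrt (J*x^2)" using that J1 by (simp add: real_sqrt_mult)
    also have "\<dots> \<le> sqrt(J*x^2 + 2*c)" using cpos by simp
    finally show ?thesis unfolding U_def by (simp add: mult.commute)
  qed
  have Feq: "Fhat n j \<beta> z = fF (z powr (real n/2))" if "z > 0" for z
  proof -
    define w where "w = z powr (real n/2)"
    have w: "w > 0" using that w_def by simp
    have t0: "t0 n j \<beta> z = T w" unfolding t0_def T_def yy_def using wz[OF that]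
      by (simp add: w_def Q_def J_def)
    show ?thesis unfolding Fhat_def FF_def t0 using wz[OF that] Tpos[OF w]
      by (simp add: w_def[symmetric] fF_def yy_def Q_def J_def ln_div)
  qed
  have Geq: "Ghat n j \<beta> z = gG (z powr (real n/2))" if "z > 0" for z
  proof -
    define w where "w = z powr (real n/2)"
    have w: "w > 0" using that w_def by simp
    have s: "sqrt (- yy n j z) = sqrt J * w" unfolding yy_def using wz[OF that] w J1
      by (simp add: w_def[symmetric] J_def real_sqrt_mult)
    have "sqrt J * w * sqrt (1 + (4 * QQ n \<beta> + 2 * gamma_n n) / (- yy n j z))
       = sqrt (J*w^2) * sqrt (1 + 2*c/(J*w^2))"
      unfolding yy_def using wz[OF that] w J1
      by (simp add: w_def[symmetric] J_def real_sqrt_mult c_def Q_def)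
    also have "\<dots> = sqrt (J*w^2 * (1 + 2*c/(J*w^2)))" by (simp add: real_sqrt_mult)
    also have "\<dots> = sqrt (J*w^2 + 2*c)" using w J1 by (simp add: field_simps)
    finally have "u0 n j \<beta> z = U w" unfolding u0_def U_def s by (simp add: field_simps)
    then show ?thesis unfolding Ghat_def GG_def s using wz[OF that]
      by (simp add: w_def[symmetric] gG_def J_def c_def Q_def)
  qed
  have wmono: "a powr (real n/2) \<le> b powr (real n/2)" if "0 < a" "a \<le> b" for a b :: real
    using that npos by (simp add: powr_mono2)
  have weta: "\<eta> \<le> z powr (real n/2)" if "z \<in> S" for z
  proof (cases "\<eta> = 0")
    case True then show ?thesis by simp
  next
    case False
    then have "\<eta> = (\<eta> powr (2/real n)) powr (real n/2)"
      using assms npos by (simp add: powr_powr)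
    also have "\<dots> \<le> z powr (real n/2)"
      using that assms npos unfolding S_def by (intro powr_mono2) auto
    finally show ?thesis .
  qed
  have dF: "DERIV (\<lambda>w. fF w + \<eta>*w) x :> (-J*x - 2*J*x*T x) + \<eta>*1" if "x > 0" for x
  proof -
    have "DERIV fF x :> (-J*x - 2*J*x*T x)"
      using Fderiv[of J Q x] that J1 Q1 unfolding fF_def T_def by simp
    then show ?thesis by (intro DERIV_add DERIV_cmult DERIV_ident)
  qed
  have dG: "DERIV (\<lambda>w. gG w - \<eta>*w) x :> (-J*x + 2*sqrt J*U x) - \<eta>*1" if "x > 0" for x
  proof -
    have "DERIV gG x :> (-J*x + 2*sqrt J*U x)"
      using Gderiv[of J c x] that J1 cpos unfolding gG_def U_def by simp
    then show ?thesis by (intro DERIV_diff DERIV_cmult DERIV_ident)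
  qed
  have A: "antimono_on S (\<lambda>z. Fhat n j \<beta> z + \<eta> * z powr (real n / 2))"
    unfolding monotone_on_def
  proof (intro ballI impI)
    fix a b assume a: "a \<in> S" and b: "b \<in> S" and ab: "a \<le> b"
    have apos: "a > 0" using a S_def by simp
    have bpos: "b > 0" using b S_def by simp
    define wa where "wa = a powr (real n/2)"
    define wb where "wb = b powr (real n/2)"
    have wab: "wa \<le> wb" using wmono[OF apos ab] wa_def wb_def by simp
    have wapos: "wa > 0" using apos wa_def by simp
    have waeta: "\<eta> \<le> wa" using weta[OF a] wa_def by simp
    have D1: "DERIV (\<lambda>w. fF w + \<eta>*w) x :> (-J*x - 2*J*x*T x) + \<eta>*1" if x: "x \<in> {wa..wb}" for x
      by (rule dF) (use x wapos in auto)
    have N1: "(-J*x - 2*J*x*T x) + \<eta>*1 \<le> 0" if x: "x \<in> {wa..wb}" for x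
    proof -
      have xpos: "x > 0" using x wapos by simp
      have "J*x \<ge> x" using J1 xpos by simp
      moreover have "J*x*T x \<ge> 0" using J1 xpos Tpos[OF xpos] by simp
      ultimately show "(-J*x - 2*J*x*T x) + \<eta>*1 \<le> 0" using x waeta by simp
    qed
    have "(\<lambda>w. fF w + \<eta>*w) wb \<le> (\<lambda>w. fF w + \<eta>*w) wa"
      by (rule deriv_nonpos_imp_antimono[OF D1 N1 wab])
    then show "Fhat n j \<beta> b + \<eta> * b powr (real n / 2) \<le> Fhat n j \<beta> a + \<eta> * a powr (real n / 2)"
      using Feq[OF apos] Feq[OF bpos] wa_def wb_def by simp
  qed
  have B: "mono_on S (\<lambda>z. Ghat n j \<beta> z - \<eta> * z powr (real n / 2))"
    unfolding monotone_on_def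
  proof (intro ballI impI)
    fix a b assume a: "a \<in> S" and b: "b \<in> S" and ab: "a \<le> b"
    have apos: "a > 0" using a S_def by simp
    have bpos: "b > 0" using b S_def by simp
    define wa where "wa = a powr (real n/2)"
    define wb where "wb = b powr (real n/2)"
    have wab: "wa \<le> wb" using wmono[OF apos ab] wa_def wb_def by simp
    have wapos: "wa > 0" using apos wa_def by simp
    have waeta: "\<eta> \<le> wa" using weta[OF a] wa_def by simp
    have D1: "DERIV (\<lambda>w. gG w - \<eta>*w) x :> (-J*x + 2*sqrt J*U x) - \<eta>*1" if x: "x \<in> {wa..wb}" for x
      by (rule dG) (use x wapos in auto)
    have N1: "(-J*x + 2*sqrt J*U x) - \<eta>*1 \<ge> 0" if x: "x \<in> {wa..wb}" for x
    proof -
      have xpos: "x > 0" using x wapos by simp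
      have "sqrt J * U x \<ge> sqrt J * (sqrt J * x)"
        using Ulow[OF xpos] J1 by (intro mult_left_mono) auto
      then have "sqrt J * U x \<ge> J * x" using J1 by (simp add: mult.assoc[symmetric])
      moreover have "J*x \<ge> x" using J1 xpos by simp
      ultimately show "(-J*x + 2*sqrt J*U x) - \<eta>*1 \<ge> 0" using x waeta by simp
    qed
    have "(\<lambda>w. gG w - \<eta>*w) wa \<le> (\<lambda>w. gG w - \<eta>*w) wb"
      by (rule deriv_nonneg_imp_mono[OF D1 N1 wab])
    then show "Ghat n j \<beta> a - \<eta> * a powr (real n / 2) \<le> Ghat n j \<beta> b - \<eta> * b powr (real n / 2)"
      using Geq[OF apos] Geq[OF bpos] wa_def wb_def by simp
  qed
  show ?thesis using A B unfolding S_def by simp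
qed

end
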